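(* Let $H=(X\cup Y,E_H)$ be a $3$-regular bipartite graph with $|X|=|Y|=n$, let $\mathrm{order}:Y\to\{1,\dots,n\}$ be a bijection, and let $G$ be the instance of the rank-maximal matchings problem constructed as follows. Applicants: $a_x$ for $x\in X$, and dummy applicants $ad_1,\dots,ad_{n-3}$. Posts: $p_y$ for $y\in Y$, and dummy posts $pd_1,\dots,pd_{n-3}$. Applicant $ad_i$ has the single post $pd_i$ at rank $1$. For $x\in X$ with neighbours $y_1,y_2,y_3$ in $H$, applicant $a_x$ ranks $p_{y_j}$ at rank $\mathrm{order}(y_j)$ ($j=1,2,3$), and the remaining $n-3$ ranks in $\{1,\dots,n\}$ of $a_x$'s list are filled by the $n-3$ dummy posts, one per rank. Then there is a one-to-one correspondence between perfect matchings of $H$ and rank-maximal matchings of $G$: the map $M\mapsto\{(a_x,p_y):(x,y)\in M\}\cup\{(ad_i,pd_i):1\le i\le n-3\}$ is a bijection from the set of perfect matchings of $H$ onto the set of rank-maximal matchings of $G$.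
   Context: An instance of the rank-maximal matchings problem is a bipartite graph between applicants and posts in which each edge $(a,p)$ carries a rank $i$, meaning $p$ is an $i$-th choice of $a$. The signature of a matching is $(x_1,\dots,x_r)$, $x_i$ the number of applicants matched along rank-$i$ edges ($r$ the maximum rank); a matching is rank-maximal if its signature is lexicographically maximum among all matchings of the instance. *)

theory Defs
  imports Main
begin

definition is_matching :: "('a \<times> 'p) set \<Rightarrow> ('a \<times> 'p) set \<Rightarrow> bool" where
  "is_matching E M \<longleftrightarrow> M \<subseteq> E \<and>
     (\<forall>a p p'. (a,p) \<in> M \<and> (a,p') \<in> M \<longrightarrow> p = p') \<and>
     (\<forall>a a' p. (a,p) \<in> M \<and> (a',p) \<in> M \<longrightarrow> a = a')"

definition signature :: "('a \<times> 'p \<Rightarrow> nat) \<Rightarrow> ('a \<times> 'p) set \<Rightarrow> nat \<Rightarrow> nat" where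
  "signature rk M i = card {e \<in> M. rk e = i}"

text \<open>Lexicographic comparison of signatures (ranks start at 1).\<close>
definition lex_greater :: "(nat \<Rightarrow> nat) \<Rightarrow> (nat \<Rightarrow> nat) \<Rightarrow> bool" where
  "lex_greater s t \<longleftrightarrow> (\<exists>i\<ge>1. (\<forall>j. 1 \<le> j \<and> j < i \<longrightarrow> s j = t j) \<and> s i > t i)"

definition rank_maximal :: "('a \<times> 'p) set \<Rightarrow> ('a \<times> 'p \<Rightarrow> nat) \<Rightarrow> ('a \<times> 'p) set \<Rightarrow> bool" where
  "rank_maximal E rk M \<longleftrightarrow> is_matching E M \<and>
     \<not> (\<exists>M'. is_matching E M' \<and> lex_greater (signature rk M') (signature rk M))"

definition perfect_matching :: "'x set \<Rightarrow> 'y set \<Rightarrow> ('x \<times> 'y) set \<Rightarrow> ('x \<times> 'y) set \<Rightarrow> bool" where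
  "perfect_matching X Y EH M \<longleftrightarrow> is_matching EH M \<and>
     (\<forall>x\<in>X. \<exists>y. (x,y) \<in> M) \<and> (\<forall>y\<in>Y. \<exists>x. (x,y) \<in> M)"

definition nbrs :: "('x \<times> 'y) set \<Rightarrow> 'x \<Rightarrow> 'y set" where
  "nbrs EH x = {y. (x,y) \<in> EH}"

text \<open>Applicants: Inl x is a_x, Inr i is ad_i. Posts: Inl y is p_y, Inr i is pd_i
  (dummy indices i in 1..n-3).\<close>

definition G_edges :: "nat \<Rightarrow> 'x set \<Rightarrow> ('x \<times> 'y) set \<Rightarrow> (('x + nat) \<times> ('y + nat)) set" where
  "G_edges n X EH =
     {(Inl x, Inl y) | x y. (x,y) \<in> EH} \<union>
     {(Inl x, Inr i) | x i. x \<in> X \<and> 1 \<le> i \<and> i \<le> n - 3} \<union>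
     {(Inr i, Inr i) | i. 1 \<le> i \<and> i \<le> n - 3}"

text \<open>dr x i is the rank at which applicant a_x lists dummy post pd_i.\<close>
fun G_rank :: "('y \<Rightarrow> nat) \<Rightarrow> ('x \<Rightarrow> nat \<Rightarrow> nat) \<Rightarrow> ('x + nat) \<times> ('y + nat) \<Rightarrow> nat" where
  "G_rank order dr (Inl x, Inl y) = order y"
| "G_rank order dr (Inl x, Inr i) = dr x i"
| "G_rank order dr (Inr i, Inr j) = 1"
| "G_rank order dr (Inr i, Inl y) = 0"

definition embed :: "nat \<Rightarrow> ('x \<times> 'y) set \<Rightarrow> (('x + nat) \<times> ('y + nat)) set" where
  "embed n M = {(Inl x, Inl y) | x y. (x,y) \<in> M} \<union> {(Inr i, Inr i) | i. 1 \<le> i \<and> i \<le> n - 3}"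

end

theory Submission
  imports Defs
begin

lemma matching_snd_inj: "is_matching E M \<Longrightarrow> inj_on snd M"
  unfolding is_matching_def inj_on_def by (metis prod.collapse)

lemma matching_fst_inj: "is_matching E M \<Longrightarrow> inj_on fst M"
  unfolding is_matching_def inj_on_def by (metis prod.collapse)

lemma embed_eq: "embed n M = (\<lambda>(x,y). (Inl x, Inl y)) ` M \<union> (\<lambda>i. (Inr i, Inr i)) ` {1..n-3}"
  unfolding embed_def by auto

lemma embed_mem: "((Inl x, Inl y) \<in> embed n M) = ((x,y) \<in> M)"
  unfolding embed_def by auto

lemma embed_inj: "inj_on (embed n) S"
proof (rule inj_onI)
  fix M M' :: "('a \<times> 'b) set" assume h: "embed n M = embed n M'"
  show "M = M'"
  proof (rule set_eqI)
    fix z :: "'a \<times> 'b"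
    obtain x y where z: "z = (x,y)" by fastforce
    show "z \<in> M \<longleftrightarrow> z \<in> M'" using h embed_mem[of x y n M] embed_mem[of x y n M'] z by simp
  qed
qed

lemma card_by_rank:
  assumes "finite M" "rk ` M \<subseteq> {1..n}"
  shows "card M = (\<Sum>k\<in>{1..n}. signature rk M k)"
proof -
  have "(\<Sum>k\<in>{1..n}. sum (\<lambda>_. 1::nat) {x \<in> M. rk x = k}) = sum (\<lambda>_. 1) M"
    by (rule sum.group[OF assms(1) finite_atLeastAtMost assms(2)])
  then show ?thesis by (simp add: signature_def)
qed


lemma hall:
  fixes A :: "'i \<Rightarrow> 'b set"
  assumes "finite I" "\<forall>i\<in>I. finite (A i)" "\<forall>J\<subseteq>I. card J \<le> card (\<Union>(A ` J))"
  shows "\<exists>f. inj_on f I \<and> (\<forall>i\<in>I. f i \<in> A i)"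
  using assms
proof (induction "card I" arbitrary: I A rule: less_induct)
  case less
  note fin = less.prems(1) and finA = less.prems(2) and H = less.prems(3)
  have finU: "finite (\<Union>(A ` J))" if "J \<subseteq> I" for J
    using that fin finA by (meson finite_UN_I finite_subset subsetD)
  show ?case
  proof (cases "I = {}")
    case True then show ?thesis by auto
  next
    case Ine: False
    show ?thesis
    proof (cases "\<exists>J. J \<subseteq> I \<and> J \<noteq> {} \<and> J \<noteq> I \<and> card (\<Union>(A ` J)) = card J")
      case True
      then obtain J where J: "J \<subseteq> I" "J \<noteq> {}" "J \<noteq> I" "card (\<Union>(A ` J)) = card J" by blast
      define U where "U = \<Union>(A ` J)"
      have cJ: "card J < card I" using J fin by (meson psubsetI psubset_card_mono)
      have finJ: "finite J" using J fin finite_subset by blast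
      obtain f1 where f1: "inj_on f1 J" "\<forall>i\<in>J. f1 i \<in> A i"
      proof -
        have a1: "\<forall>i\<in>J. finite (A i)" using finA J(1) by blast
        have a2: "\<forall>K\<subseteq>J. card K \<le> card (\<Union>(A ` K))" using H J(1) by blast
        from less.hyps[OF cJ finJ a1 a2] obtain g where "inj_on g J" "\<forall>i\<in>J. g i \<in> A i" by blast
        then show ?thesis by (rule that)
      qed
      define A' where "A' = (\<lambda>i. A i - U)"
      have cIJ: "card (I - J) < card I" using J fin
      proof -
        have "card J > 0" using finJ J(2) by (simp add: card_gt_0_iff)
        then show ?thesis using card_Diff_subset[OF finJ J(1)] cJ by simp
      qed
      have H': "\<forall>K\<subseteq>I - J. card K \<le> card (\<Union>(A' ` K))"
      proof (intro allI impI)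
        fix K assume K: "K \<subseteq> I - J"
        have KJ: "K \<union> J \<subseteq> I" using K J by blast
        have eq: "\<Union>(A' ` K) = \<Union>(A ` (K \<union> J)) - U" unfolding A'_def U_def by blast
        have sub: "U \<subseteq> \<Union>(A ` (K \<union> J))" unfolding U_def by blast
        have fK: "finite K" using K fin finite_subset by blast
        have "card (K \<union> J) = card K + card J"
          using K fK finJ by (subst card_Un_disjoint) auto
        moreover have "card (K \<union> J) \<le> card (\<Union>(A ` (K \<union> J)))" using H KJ by blast
        moreover have "card (\<Union>(A' ` K)) = card (\<Union>(A ` (K \<union> J))) - card U"
          unfolding eq using sub finU[OF KJ] by (simp add: card_Diff_subset finite_subset)
        ultimately show "card K \<le> card (\<Union>(A' ` K))" using J(4) U_def by simp
      qed
      obtain f2 where f2: "inj_on f2 (I - J)" "\<forall>i\<in>I - J. f2 i \<in> A' i"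
        using less.hyps[OF cIJ _ _ H'] fin finA unfolding A'_def by blast
      define f where "f = (\<lambda>i. if i \<in> J then f1 i else f2 i)"
      have "inj_on f I"
        unfolding inj_on_def f_def
      proof (intro ballI impI)
        fix x y assume xy: "x \<in> I" "y \<in> I" "(if x \<in> J then f1 x else f2 x) = (if y \<in> J then f1 y else f2 y)"
        show "x = y"
        proof (cases "x \<in> J"; cases "y \<in> J")
          assume "x \<in> J" "y \<in> J" then show ?thesis using xy f1 by (auto dest: inj_onD)
        next
          assume "x \<notin> J" "y \<notin> J" then show ?thesis using xy f2 by (auto dest: inj_onD)
        next
          assume a: "x \<in> J" "y \<notin> J"
          then have "f1 x \<in> U" using f1 U_def by blast
          moreover have "f2 y \<notin> U" using f2(2) a xy(2) unfolding A'_def by blast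
          ultimately show ?thesis using xy a by auto
        next
          assume a: "x \<notin> J" "y \<in> J"
          then have "f1 y \<in> U" using f1 U_def by blast
          moreover have "f2 x \<notin> U" using f2(2) a xy(1) unfolding A'_def by blast
          ultimately show ?thesis using xy a by auto
        qed
      qed
      moreover have "\<forall>i\<in>I. f i \<in> A i" using f1 f2 unfolding f_def A'_def by auto
      ultimately show ?thesis by blast
    next
      case False
      then have strict: "\<And>J. J \<subseteq> I \<Longrightarrow> J \<noteq> {} \<Longrightarrow> J \<noteq> I \<Longrightarrow> card J < card (\<Union>(A ` J))"
        using H by (metis le_neq_implies_less)
      obtain i0 where i0: "i0 \<in> I" using Ine by blast
      have "card {i0} \<le> card (\<Union>(A ` {i0}))" using H i0 by blast
      then have "card {i0} \<le> card (A i0)" by simp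
      then have "A i0 \<noteq> {}" by auto
      then obtain a where a: "a \<in> A i0" by blast
      define A' where "A' = (\<lambda>i. A i - {a})"
      have cI: "card (I - {i0}) < card I" using i0 fin by (meson card_Diff1_less)
      have H': "\<forall>K\<subseteq>I - {i0}. card K \<le> card (\<Union>(A' ` K))"
      proof (intro allI impI)
        fix K assume K: "K \<subseteq> I - {i0}"
        show "card K \<le> card (\<Union>(A' ` K))"
        proof (cases "K = {}")
          case True then show ?thesis by simp
        next
          case False
          have KI: "K \<subseteq> I" using K by blast
          have "K \<noteq> I" using K i0 by blast
          then have lt: "card K < card (\<Union>(A ` K))" using strict KI False by blast
          have eq: "\<Union>(A' ` K) = \<Union>(A ` K) - {a}" unfolding A'_def by blast
          have "card (\<Union>(A ` K)) - 1 \<le> card (\<Union>(A ` K) - {a})"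
            by (simp add: card_Diff_singleton_if)
          then show ?thesis using lt eq by simp
        qed
      qed
      obtain f2 where f2: "inj_on f2 (I - {i0})" "\<forall>i\<in>I - {i0}. f2 i \<in> A' i"
        using less.hyps[OF cI _ _ H'] fin finA unfolding A'_def by blast
      define f where "f = (\<lambda>i. if i = i0 then a else f2 i)"
      have "inj_on f I"
        unfolding inj_on_def f_def using f2 A'_def by (auto dest: inj_onD)
      moreover have "\<forall>i\<in>I. f i \<in> A i" using a f2 unfolding f_def A'_def by auto
      ultimately show ?thesis by blast
    qed
  qed
qed


theorem lemma5:
  fixes X :: "'x set" and Y :: "'y set" and EH :: "('x \<times> 'y) set"
    and n :: nat and order :: "'y \<Rightarrow> nat" and dr :: "'x \<Rightarrow> nat \<Rightarrow> nat"
  assumes "finite X" and "finite Y"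
    and "card X = n" and "card Y = n"
    and "EH \<subseteq> X \<times> Y"
    and "\<forall>x\<in>X. card {y. (x,y) \<in> EH} = 3"
    and "\<forall>y\<in>Y. card {x. (x,y) \<in> EH} = 3"
    and "bij_betw order Y {1..n}"
    and "\<forall>x\<in>X. bij_betw (dr x) {1..n - 3} ({1..n} - order ` nbrs EH x)"
  shows "bij_betw (embed n) {M. perfect_matching X Y EH M}
           {M. rank_maximal (G_edges n X EH) (G_rank order dr) M}"
proof -
  note finX = assms(1) and finY = assms(2) and cX = assms(3) and cY = assms(4)
    and EHsub = assms(5) and degX = assms(6) and degY = assms(7) and bo = assms(8) and bdr = assms(9)
  define m where "m = n - 3"
  define E where "E = G_edges n X EH"
  define rk where "rk = G_rank order dr"
  have finEH: "finite EH" using EHsub finX finY by (meson finite_SigmaI finite_subset)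
  have Ecases: "\<And>e thesis. e \<in> E \<Longrightarrow> (\<And>x y. e = (Inl x, Inl y) \<Longrightarrow> (x,y)\<in>EH \<Longrightarrow> thesis)
    \<Longrightarrow> (\<And>x i. e = (Inl x, Inr i) \<Longrightarrow> x\<in>X \<Longrightarrow> 1\<le>i \<Longrightarrow> i\<le>m \<Longrightarrow> thesis)
    \<Longrightarrow> (\<And>i. e = (Inr i, Inr i) \<Longrightarrow> 1\<le>i \<Longrightarrow> i\<le>m \<Longrightarrow> thesis) \<Longrightarrow> thesis"
    unfolding E_def m_def G_edges_def by blast
  have ER: "\<And>x y. (x,y) \<in> EH \<Longrightarrow> (Inl x, Inl y) \<in> E" unfolding E_def G_edges_def by blast
  have EZ: "\<And>i. 1 \<le> i \<Longrightarrow> i \<le> m \<Longrightarrow> (Inr i, Inr i) \<in> E" unfolding E_def G_edges_def m_def by blast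
  show ?thesis
  proof (cases "n = 0")
    case True
    then have X0: "X = {}" and Y0: "Y = {}" using cX cY finX finY by auto
    then have EH0: "EH = {}" using EHsub by auto
    have E0: "E = {}"
    proof -
      have "e \<notin> E" for e
      proof
        assume "e \<in> E"
        then show False by (rule Ecases) (use True X0 EH0 m_def in auto)
      qed
      then show ?thesis by blast
    qed
    have "{M. perfect_matching X Y EH M} = {{}}"
      using EH0 X0 Y0 by (auto simp: perfect_matching_def is_matching_def)
    moreover have "{M. rank_maximal (G_edges n X EH) (G_rank order dr) M} = {{}}"
      using E0 unfolding E_def[symmetric] rk_def[symmetric]
      by (auto simp: rank_maximal_def is_matching_def lex_greater_def signature_def)
    moreover have "embed n {} = {}" using True by (auto simp: embed_def)
    ultimately show ?thesis by (simp add: bij_betw_def)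
  next
    case False
    then obtain x0 where x0: "x0 \<in> X" using cX by fastforce
    have "{y. (x0,y) \<in> EH} \<subseteq> Y" using EHsub by auto
    then have n3: "3 \<le> n" using degX x0 cY finY by (metis card_mono)
    have injo: "inj_on order Y" using bo by (simp add: bij_betw_def)
    have ordY: "\<And>y. y \<in> Y \<Longrightarrow> order y \<in> {1..n}" using bo by (meson bij_betw_apply)
    have ordS: "\<And>k. k \<in> {1..n} \<Longrightarrow> \<exists>y\<in>Y. order y = k" using bo
      by (metis bij_betw_def imageE)
    have rkE: "\<And>e. e \<in> E \<Longrightarrow> rk e \<in> {1..n}"
    proof -
      fix e assume "e \<in> E"
      then consider (R) x y where "e = (Inl x, Inl y)" "(x,y)\<in>EH"
        | (D) x i where "e = (Inl x, Inr i)" "x\<in>X" "1\<le>i" "i\<le>m"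
        | (Z) i where "e = (Inr i, Inr i)" "1\<le>i" "i\<le>m" by (rule Ecases)
      then show "rk e \<in> {1..n}"
      proof cases
        case R then show ?thesis using ordY EHsub unfolding rk_def by auto
      next
        case D
        then have "dr x i \<in> {1..n} - order ` nbrs EH x"
          using bij_betw_apply[OF bdr[rule_format, OF D(2)]] D m_def by auto
        then show ?thesis using D unfolding rk_def by auto
      next
        case Z then show ?thesis using n3 unfolding rk_def by auto
      qed
    qed
    define Appl where "Appl = (Inl ` X \<union> Inr ` {1..m} :: ('x + nat) set)"
    define Posts where "Posts = (Inl ` Y \<union> Inr ` {1..m} :: ('y + nat) set)"
    have cAppl: "card Appl = n + m" unfolding Appl_def using finX cX
      by (subst card_Un_disjoint) (auto simp: card_image)
    have cPosts: "card Posts = n + m" unfolding Posts_def using finY cY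
      by (subst card_Un_disjoint) (auto simp: card_image)
    have Esub: "E \<subseteq> Appl \<times> Posts"
    proof
      fix e assume "e \<in> E"
      then show "e \<in> Appl \<times> Posts" by (rule Ecases) (use EHsub in \<open>auto simp: Appl_def Posts_def\<close>)
    qed
    have finE: "finite E" using Esub unfolding Appl_def Posts_def using finX finY
      by (meson finite_Un finite_SigmaI finite_atLeastAtMost finite_imageI finite_subset)
    have finM: "\<And>M. is_matching E M \<Longrightarrow> finite M"
      using finE by (meson is_matching_def finite_subset)
    obtain y1 where y1: "y1 \<in> Y" "order y1 = 1" using ordS n3 by force
    define P1 where "P1 = insert (Inl y1) (Inr ` {1..m} :: ('y + nat) set)"
    have cP1: "card P1 \<le> m + 1"
    proof -
      have c: "card (Inr ` {1..m} :: ('y+nat) set) = m" by (simp add: card_image)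
      show ?thesis using c unfolding P1_def by (simp add: card_insert_if)
    qed
    have R1sub: "\<And>M. is_matching E M \<Longrightarrow> snd ` {e\<in>M. rk e = 1} \<subseteq> P1"
    proof
      fix M p assume M: "is_matching E M" and p: "p \<in> snd ` {e\<in>M. rk e = 1}"
      then obtain e where e: "e \<in> M" "rk e = 1" "p = snd e" by auto
      then have "e \<in> E" using M by (auto simp: is_matching_def)
      then consider (R) x y where "e = (Inl x, Inl y)" "(x,y)\<in>EH"
        | (D) x i where "e = (Inl x, Inr i)" "x\<in>X" "1\<le>i" "i\<le>m"
        | (Z) i where "e = (Inr i, Inr i)" "1\<le>i" "i\<le>m" by (rule Ecases)
      then show "p \<in> P1"
      proof cases
        case R
        then have "y \<in> Y" "order y = 1" using EHsub e unfolding rk_def by auto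
        then have "y = y1" using y1 injo by (metis inj_onD)
        then show ?thesis using R e unfolding P1_def by auto
      qed (use e in \<open>auto simp: P1_def\<close>)
    qed
    have UB1: "\<And>M. is_matching E M \<Longrightarrow> signature rk M 1 \<le> m + 1"
    proof -
      fix M assume M: "is_matching E M"
      have "inj_on snd {e\<in>M. rk e = 1}" using matching_snd_inj[OF M] by (auto intro: inj_on_subset)
      then have "signature rk M 1 = card (snd ` {e\<in>M. rk e = 1})"
        unfolding signature_def by (simp add: card_image)
      also have "\<dots> \<le> card P1" using R1sub[OF M] by (simp add: card_mono P1_def)
      finally show "signature rk M 1 \<le> m + 1" using cP1 by simp
    qed
    have UB2: "\<And>M k. is_matching E M \<Longrightarrow> signature rk M 1 = m + 1 \<Longrightarrow> 2 \<le> k \<Longrightarrow> signature rk M k \<le> 1"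
    proof -
      fix M and k :: nat assume M: "is_matching E M" and s1: "signature rk M 1 = m + 1" and k: "2 \<le> k"
      have injs: "inj_on snd M" using matching_snd_inj[OF M] .
      have "inj_on snd {e\<in>M. rk e = 1}" using injs by (auto intro: inj_on_subset)
      then have "card (snd ` {e\<in>M. rk e = 1}) = m + 1"
        using s1 unfolding signature_def by (simp add: card_image)
      then have P1eq: "snd ` {e\<in>M. rk e = 1} = P1"
        by (intro card_seteq[OF _ R1sub[OF M]]) (use cP1 in \<open>simp_all add: P1_def\<close>)
      have Rk: "\<forall>e\<in>{e\<in>M. rk e = k}. \<exists>y\<in>Y. snd e = Inl y \<and> order y = k"
      proof
        fix e assume e: "e \<in> {e\<in>M. rk e = k}"
        then have "e \<in> E" using M by (auto simp: is_matching_def)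
        then consider (R) x y where "e = (Inl x, Inl y)" "(x,y)\<in>EH"
          | (D) x i where "e = (Inl x, Inr i)" "x\<in>X" "1\<le>i" "i\<le>m"
          | (Z) i where "e = (Inr i, Inr i)" "1\<le>i" "i\<le>m" by (rule Ecases)
        then show "\<exists>y\<in>Y. snd e = Inl y \<and> order y = k"
        proof cases
          case R then show ?thesis using e EHsub unfolding rk_def by auto
        next
          case D
          then have "Inr i \<in> P1" unfolding P1_def by auto
          then obtain e' where e': "e' \<in> M" "rk e' = 1" "snd e' = Inr i" using P1eq by force
          then have "e' = e" using inj_onD[OF injs, of e' e] e D by auto
          then show ?thesis using e e' k by auto
        next
          case Z then show ?thesis using e k unfolding rk_def by auto
        qed
      qed
      have "card {e\<in>M. rk e = k} \<le> Suc 0"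
      proof (subst card_le_Suc0_iff_eq)
        show "finite {e\<in>M. rk e = k}" using finM[OF M] by simp
        show "\<forall>a1\<in>{e\<in>M. rk e = k}. \<forall>a2\<in>{e\<in>M. rk e = k}. a1 = a2"
        proof (intro ballI)
          fix a1 a2 assume a: "a1 \<in> {e\<in>M. rk e = k}" "a2 \<in> {e\<in>M. rk e = k}"
          from Rk a(1) obtain y where y: "y\<in>Y" "snd a1 = Inl y" "order y = k" by blast
          from Rk a(2) obtain y' where y': "y'\<in>Y" "snd a2 = Inl y'" "order y' = k" by blast
          have "y = y'" using inj_onD[OF injo, of y y'] y y' by simp
          then have "snd a1 = snd a2" using y y' by simp
          then show "a1 = a2" using inj_onD[OF injs, of a1 a2] a by simp
        qed
      qed
      then show "signature rk M k \<le> 1" by (simp add: signature_def)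
    qed
    have UB3: "\<And>M k. is_matching E M \<Longrightarrow> n < k \<Longrightarrow> signature rk M k = 0"
    proof -
      fix M k assume M: "is_matching E M" and k: "n < k"
      have "rk e \<noteq> k" if "e \<in> M" for e using rkE[of e] that M k unfolding is_matching_def by auto
      then have "{e\<in>M. rk e = k} = {}" by blast
      then show "signature rk M k = 0" unfolding signature_def by (simp only: card.empty)
    qed
    define sv where "sv = (\<lambda>k::nat. if k = 1 then m + 1 else if k \<le> n then 1 else (0::nat))"
    have L1: "\<And>M t. is_matching E M \<Longrightarrow> \<forall>k\<ge>1. t k = sv k \<Longrightarrow> \<not> lex_greater (signature rk M) t"
    proof
      fix M t assume M: "is_matching E M" and t: "\<forall>k\<ge>1. t k = sv k"
        and lg: "lex_greater (signature rk M) t"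
      then obtain i where i: "i \<ge> 1" "\<forall>j. 1 \<le> j \<and> j < i \<longrightarrow> signature rk M j = t j"
        "signature rk M i > t i" unfolding lex_greater_def by blast
      have t1: "t 1 = m + 1" using t by (simp add: sv_def)
      show False
      proof (cases "i = 1")
        case True
        have "signature rk M 1 \<le> m + 1" by (rule UB1[OF M])
        then show ?thesis using i(3) True t1 by simp
      next
        case False
        have i1: "1 < i" using False i(1) by simp
        have "signature rk M 1 = t 1" using i(2) i1 by simp
        then have s1: "signature rk M 1 = m + 1" using t1 by simp
        show False
        proof (cases "i \<le> n")
          case True
          have "signature rk M i \<le> 1" using UB2[OF M s1, of i] i1 by simp
          moreover have "t i = 1" using t True i1 by (simp add: sv_def)
          ultimately show False using i(3) by simp
        next
          case False
          have "signature rk M i = 0" using UB3[OF M, of i] False by simp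
          then show False using i(3) by simp
        qed
      qed
    qed
    have L2: "\<And>M t. is_matching E M \<Longrightarrow> \<forall>k\<ge>1. t k = sv k \<Longrightarrow> \<not> lex_greater t (signature rk M)
       \<Longrightarrow> \<forall>k\<in>{1..n}. signature rk M k = sv k"
    proof (rule ccontr)
      fix M t assume M: "is_matching E M" and t: "\<forall>k\<ge>1. t k = sv k"
        and nlg: "\<not> lex_greater t (signature rk M)" and ne: "\<not> (\<forall>k\<in>{1..n}. signature rk M k = sv k)"
      define P where "P = (\<lambda>k. k \<in> {1..n} \<and> signature rk M k \<noteq> sv k)"
      have ex: "\<exists>k. P k" using ne P_def by auto
      define i where "i = (LEAST k. P k)"
      have Pi: "P i" using LeastI_ex[OF ex] i_def by simp
      have below: "\<And>j. 1 \<le> j \<Longrightarrow> j < i \<Longrightarrow> signature rk M j = sv j"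
      proof -
        fix j assume "1 \<le> j" "j < i"
        then have "\<not> P j" using not_less_Least i_def by blast
        then show "signature rk M j = sv j" using \<open>1 \<le> j\<close> \<open>j < i\<close> Pi P_def by auto
      qed
      have gt: "sv i > signature rk M i"
      proof (cases "i = 1")
        case True then show ?thesis using Pi P_def UB1[OF M] by (simp add: sv_def)
      next
        case False
        then have "signature rk M 1 = m + 1" using below[of 1] Pi P_def by (simp add: sv_def)
        then show ?thesis using UB2[OF M, of i] Pi P_def False by (auto simp: sv_def)
      qed
      have "lex_greater t (signature rk M)"
        unfolding lex_greater_def using Pi P_def below gt t by (intro exI[of _ i]) auto
      then show False using nlg by simp
    qed
    have finnb: "\<And>x. finite (nbrs EH x)" unfolding nbrs_def
      by (rule finite_subset[OF _ finY]) (use EHsub in auto)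
    have finnb2: "\<And>y. finite {x. (x,y) \<in> EH}"
      by (rule finite_subset[OF _ finX]) (use EHsub in auto)
    have hallc: "\<forall>J\<subseteq>X. card J \<le> card (\<Union>(nbrs EH ` J))"
    proof (intro allI impI)
      fix J assume J: "J \<subseteq> X"
      define N where "N = \<Union>(nbrs EH ` J)"
      have finJ: "finite J" using J finX finite_subset by blast
      have NY: "N \<subseteq> Y" using J EHsub unfolding N_def nbrs_def by auto
      have finN: "finite N" using NY finY finite_subset by blast
      have "(\<Sum>x\<in>J. card (nbrs EH x)) = (\<Sum>x\<in>J. (3::nat))"
        using degX J unfolding nbrs_def by (intro sum.cong) auto
      then have "3 * card J = (\<Sum>x\<in>J. card (nbrs EH x))" by simp
      also have "\<dots> = card (SIGMA x:J. nbrs EH x)" using finJ finnb by simp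
      also have "\<dots> \<le> card ((\<lambda>(y,x). (x,y)) ` (SIGMA y:N. {x. (x,y) \<in> EH}))"
        by (rule card_mono) (simp add: finN finnb2, force simp: N_def nbrs_def image_iff)
      also have "\<dots> \<le> card (SIGMA y:N. {x. (x,y) \<in> EH})" by (rule card_image_le) (simp add: finN finnb2)
      also have "\<dots> = (\<Sum>y\<in>N. card {x. (x,y) \<in> EH})" using finN finnb2 by simp
      also have "\<dots> = (\<Sum>y\<in>N. (3::nat))" using degY NY by (intro sum.cong) auto
      also have "\<dots> = 3 * card N" by simp
      finally show "card J \<le> card (\<Union>(nbrs EH ` J))" unfolding N_def by simp
    qed
    obtain f where f: "inj_on f X" "\<forall>x\<in>X. f x \<in> nbrs EH x"
      using hall[OF finX _ hallc] finnb by blast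
    define M0 where "M0 = (\<lambda>x. (x, f x)) ` X"
    have fXY: "f ` X = Y"
    proof (rule card_subset_eq[OF finY])
      show "f ` X \<subseteq> Y" using f EHsub unfolding nbrs_def by auto
      show "card (f ` X) = card Y" using f cX cY by (simp add: card_image)
    qed
    have PM0: "perfect_matching X Y EH M0"
      unfolding perfect_matching_def is_matching_def M0_def
      using f fXY unfolding nbrs_def by (auto dest: inj_onD)
    have PMcard: "\<And>M. perfect_matching X Y EH M \<Longrightarrow> card M = n"
    proof -
      fix M assume M: "perfect_matching X Y EH M"
      then have mm: "is_matching EH M" by (simp add: perfect_matching_def)
      have "fst ` M = X" using M EHsub unfolding perfect_matching_def is_matching_def by force
      then show "card M = n" using matching_fst_inj[OF mm] cX by (metis card_image)
    qed
    have PMmatch: "\<And>M. perfect_matching X Y EH M \<Longrightarrow> is_matching E (embed n M)"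
    proof -
      fix M assume M: "perfect_matching X Y EH M"
      then have mm: "M \<subseteq> EH" "\<forall>a p p'. (a,p) \<in> M \<and> (a,p') \<in> M \<longrightarrow> p = p'"
         "\<forall>a a' p. (a,p) \<in> M \<and> (a',p) \<in> M \<longrightarrow> a = a'"
        by (auto simp: perfect_matching_def is_matching_def)
      show "is_matching E (embed n M)"
        unfolding is_matching_def
      proof (intro conjI)
        show "embed n M \<subseteq> E" unfolding embed_def m_def[symmetric] using mm(1) ER EZ by blast
        show "\<forall>a p p'. (a, p) \<in> embed n M \<and> (a, p') \<in> embed n M \<longrightarrow> p = p'"
          unfolding embed_def using mm(2) by blast
        show "\<forall>a a' p. (a, p) \<in> embed n M \<and> (a', p) \<in> embed n M \<longrightarrow> a = a'"
          unfolding embed_def using mm(3) by blast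
      qed
    qed
    have PMcardE: "\<And>M. perfect_matching X Y EH M \<Longrightarrow> card (embed n M) = n + m"
    proof -
      fix M assume M: "perfect_matching X Y EH M"
      have fin: "finite M" using M finEH by (meson perfect_matching_def is_matching_def finite_subset)
      have "inj_on (\<lambda>(x,y). (Inl x, Inl y) :: ('x+nat) \<times> ('y+nat)) M" by (auto simp: inj_on_def)
      then have c1: "card ((\<lambda>(x,y). (Inl x, Inl y) :: ('x+nat) \<times> ('y+nat)) ` M) = n"
        using PMcard[OF M] by (simp add: card_image)
      have c2: "card ((\<lambda>i. (Inr i, Inr i) :: ('x+nat) \<times> ('y+nat)) ` {1..m}) = m"
        by (subst card_image) (auto simp: inj_on_def)
      show "card (embed n M) = n + m" unfolding embed_eq m_def[symmetric]
        using c1 c2 fin by (subst card_Un_disjoint) auto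
    qed
    have PMsig: "\<And>M k. perfect_matching X Y EH M \<Longrightarrow> k \<ge> 1 \<Longrightarrow> signature rk (embed n M) k = sv k"
    proof -
      fix M and k :: nat assume M: "perfect_matching X Y EH M" and k: "k \<ge> 1"
      have me: "is_matching E (embed n M)" by (rule PMmatch[OF M])
      have fe: "finite (embed n M)" by (rule finM[OF me])
      show "signature rk (embed n M) k = sv k"
      proof (cases "k = 1")
        case True
        obtain x1 where x1: "(x1, y1) \<in> M" using M y1 by (auto simp: perfect_matching_def)
        let ?S = "insert (Inl x1, Inl y1) ((\<lambda>i. (Inr i, Inr i) :: ('x+nat) \<times> ('y+nat)) ` {1..m})"
        have "?S \<subseteq> {e \<in> embed n M. rk e = 1}"
          using x1 y1 unfolding embed_def rk_def m_def by auto
        moreover have "card ?S = m + 1"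
          by (subst card_insert_disjoint) (auto simp: card_image inj_on_def)
        ultimately have "m + 1 \<le> signature rk (embed n M) 1"
          unfolding signature_def using fe card_mono[of "{e \<in> embed n M. rk e = 1}" ?S] by auto
        then show ?thesis using UB1[OF me] True by (simp add: sv_def)
      next
        case False
        show ?thesis
        proof (cases "k \<le> n")
          case True
          then obtain yk where yk: "yk \<in> Y" "order yk = k" using ordS k by force
          obtain xk where xk: "(xk, yk) \<in> M" using M yk by (auto simp: perfect_matching_def)
          have "(Inl xk, Inl yk) \<in> {e \<in> embed n M. rk e = k}"
            using xk yk unfolding embed_def rk_def by auto
          then have "1 \<le> signature rk (embed n M) k"
            unfolding signature_def using fe by (auto simp: Suc_le_eq card_gt_0_iff)
          moreover have "signature rk (embed n M) 1 = m + 1"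
          proof -
            obtain x1 where x1: "(x1, y1) \<in> M" using M y1 by (auto simp: perfect_matching_def)
            let ?S = "insert (Inl x1, Inl y1) ((\<lambda>i. (Inr i, Inr i) :: ('x+nat) \<times> ('y+nat)) ` {1..m})"
            have "?S \<subseteq> {e \<in> embed n M. rk e = 1}"
              using x1 y1 unfolding embed_def rk_def m_def by auto
            moreover have "card ?S = m + 1"
              by (subst card_insert_disjoint) (auto simp: card_image inj_on_def)
            ultimately have "m + 1 \<le> signature rk (embed n M) 1"
              unfolding signature_def using fe card_mono[of "{e \<in> embed n M. rk e = 1}" ?S] by auto
            then show ?thesis using UB1[OF me] by simp
          qed
          ultimately show ?thesis using UB2[OF me, of k] False k True by (simp add: sv_def)
        next
          case False
          then show ?thesis using UB3[OF me, of k] n3 by (simp add: sv_def)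
        qed
      qed
    qed
    have fwd: "\<And>M. perfect_matching X Y EH M \<Longrightarrow> rank_maximal E rk (embed n M)"
      unfolding rank_maximal_def using PMmatch L1 PMsig by blast
    have bwd: "\<And>M. rank_maximal E rk M \<Longrightarrow> \<exists>M'. perfect_matching X Y EH M' \<and> M = embed n M'"
    proof -
      fix M assume rm: "rank_maximal E rk M"
      then have M: "is_matching E M" by (simp add: rank_maximal_def)
      have nlg: "\<not> lex_greater (signature rk (embed n M0)) (signature rk M)"
        using rm PMmatch[OF PM0] unfolding rank_maximal_def by blast
      have sigeq: "\<forall>k\<in>{1..n}. signature rk M k = sv k"
        using L2[OF M _ nlg] PMsig[OF PM0] by blast
      have rkM: "rk ` M \<subseteq> {1..n}" using M rkE by (auto simp: is_matching_def)
      have rkM0: "rk ` embed n M0 \<subseteq> {1..n}" using PMmatch[OF PM0] rkE by (auto simp: is_matching_def)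
      have "card M = (\<Sum>k\<in>{1..n}. signature rk M k)" by (rule card_by_rank[OF finM[OF M] rkM])
      also have "\<dots> = (\<Sum>k\<in>{1..n}. signature rk (embed n M0) k)"
        using sigeq PMsig[OF PM0] by (intro sum.cong) auto
      also have "\<dots> = card (embed n M0)" by (rule card_by_rank[OF finM[OF PMmatch[OF PM0]] rkM0, symmetric])
      finally have cM: "card M = n + m" using PMcardE[OF PM0] by simp
      have MsubE: "M \<subseteq> E" using M by (simp add: is_matching_def)
      have fA: "fst ` M = Appl"
      proof (rule card_subset_eq)
        show "finite Appl" unfolding Appl_def using finX by simp
        show "fst ` M \<subseteq> Appl" using MsubE Esub by force
        show "card (fst ` M) = card Appl" using cM cAppl matching_fst_inj[OF M] by (simp add: card_image)
      qed
      have fP: "snd ` M = Posts"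
      proof (rule card_subset_eq)
        show "finite Posts" unfolding Posts_def using finY by simp
        show "snd ` M \<subseteq> Posts" using MsubE Esub by force
        show "card (snd ` M) = card Posts" using cM cPosts matching_snd_inj[OF M] by (simp add: card_image)
      qed
      have Zin: "\<And>i. 1 \<le> i \<Longrightarrow> i \<le> m \<Longrightarrow> (Inr i, Inr i) \<in> M"
      proof -
        fix i assume i: "1 \<le> i" "i \<le> m"
        then have "Inr i \<in> fst ` M" using fA unfolding Appl_def by auto
        then obtain p where p: "(Inr i, p) \<in> M" by force
        then have "(Inr i, p) \<in> E" using MsubE by auto
        then have "p = Inr i" by (rule Ecases) auto
        then show "(Inr i, Inr i) \<in> M" using p by simp
      qed
      have noD: "\<And>x i. (Inl x, Inr i) \<notin> M"
      proof
        fix x i assume a: "(Inl x, Inr i) \<in> M"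
        then have "(Inl x, Inr i) \<in> E" using MsubE by auto
        then have "1 \<le> i \<and> i \<le> m" by (rule Ecases) auto
        then have "1 \<le> i" "i \<le> m" by auto
        then have "(Inr i, Inr i) \<in> M" by (rule Zin)
        then show False using a M unfolding is_matching_def by blast
      qed
      define M' where "M' = {(x,y). (Inl x, Inl y) \<in> M}"
      have Meq: "M = embed n M'"
      proof
        show "M \<subseteq> embed n M'"
        proof
          fix e assume e: "e \<in> M"
          then have "e \<in> E" using MsubE by auto
          then show "e \<in> embed n M'"
            by (rule Ecases) (use e noD in \<open>auto simp: embed_def M'_def m_def[symmetric]\<close>)
        qed
        show "embed n M' \<subseteq> M" using Zin unfolding embed_def M'_def m_def[symmetric] by auto
      qed
      have "perfect_matching X Y EH M'"
        unfolding perfect_matching_def is_matching_def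
      proof (intro conjI)
        show "M' \<subseteq> EH"
        proof
          fix z assume z: "z \<in> M'"
          obtain x y where xy: "z = (x,y)" by fastforce
          then have "(Inl x, Inl y) \<in> E" using z MsubE unfolding M'_def by auto
          then have "(x,y) \<in> EH" by (rule Ecases) auto
          then show "z \<in> EH" using xy by simp
        qed
        show "\<forall>a p p'. (a, p) \<in> M' \<and> (a, p') \<in> M' \<longrightarrow> p = p'"
          using M unfolding M'_def is_matching_def by blast
        show "\<forall>a a' p. (a, p) \<in> M' \<and> (a', p) \<in> M' \<longrightarrow> a = a'"
          using M unfolding M'_def is_matching_def by blast
        show "\<forall>x\<in>X. \<exists>y. (x, y) \<in> M'"
        proof
          fix x assume "x \<in> X"
          then have "Inl x \<in> fst ` M" using fA unfolding Appl_def by auto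
          then obtain p where p: "(Inl x, p) \<in> M" by force
          then show "\<exists>y. (x, y) \<in> M'" using noD unfolding M'_def by (cases p) auto
        qed
        show "\<forall>y\<in>Y. \<exists>x. (x, y) \<in> M'"
        proof
          fix y assume "y \<in> Y"
          then have "Inl y \<in> snd ` M" using fP unfolding Posts_def by auto
          then obtain a where a: "(a, Inl y) \<in> M" by force
          then have "(a, Inl y) \<in> E" using MsubE by auto
          then have "\<exists>x. a = Inl x" by (rule Ecases) auto
          then obtain x where "a = Inl x" by blast
          then show "\<exists>x. (x, y) \<in> M'" using a unfolding M'_def by auto
        qed
      qed
      then show "\<exists>M'. perfect_matching X Y EH M' \<and> M = embed n M'" using Meq by blast
    qed
    show ?thesis
      unfolding bij_betw_def E_def[symmetric] rk_def[symmetric]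
    proof
      show "inj_on (embed n) {M. perfect_matching X Y EH M}" by (rule embed_inj)
      show "embed n ` {M. perfect_matching X Y EH M} = {M. rank_maximal E rk M}"
        using fwd bwd by blast
    qed
  qed
qed

end
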